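(* Let $V$ be a finite-dimensional vector space over $\mathbb{F}_q$ and $\xi:\mathbb{F}_q^{\nu_1}\to V$ a surjective linear map, where $\mathbb{F}_q^{\nu_1}$ carries the Hamming weight. Then there exist an integer $\nu_2\le\nu_1$ and a surjective linear map $\varphi:\mathbb{F}_q^{\nu_2}\to V$ (with $\mathbb{F}_q^{\nu_2}$ carrying the Hamming weight) such that $\operatorname{wt}_{\mathrm{quot},\xi}=\operatorname{wt}_{\mathrm{quot},\varphi}$ on $V$, and $\varphi$ is a parent function, i.e. the vectors $\varphi(e_1),\dots,\varphi(e_{\nu_2})$ are pairwise linearly independent, and $d_H(\ker\varphi)\ge3$.
   Context: For a surjective linear map $\psi:(X,\operatorname{wt}_X)\to Y$, the quotient weight is $\operatorname{wt}_{\mathrm{quot},\psi}(y)=\min\{\operatorname{wt}_X(x):x\in\psi^{-1}(y)\}$. $e_i$ denote standard basis vectors. $d_H(C)$ is the minimum Hamming distance between distinct elements of a code $C$. *)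

theory Defs
  imports Main "HOL-Library.Extended_Nat"
begin

definition fvecs :: "nat \<Rightarrow> (nat \<Rightarrow> 'a::zero) set" where
  "fvecs n = {x. \<forall>i\<ge>n. x i = 0}"

definition hweight :: "nat \<Rightarrow> (nat \<Rightarrow> 'a::zero) \<Rightarrow> nat" where
  "hweight n x = card {i. i < n \<and> x i \<noteq> 0}"

definition hdist :: "nat \<Rightarrow> (nat \<Rightarrow> 'a::zero) \<Rightarrow> (nat \<Rightarrow> 'a) \<Rightarrow> nat" where
  "hdist n x y = card {i. i < n \<and> x i \<noteq> y i}"

text \<open>Minimum Hamming distance between distinct elements of a code (infinity if no two).\<close>
definition min_hdist :: "nat \<Rightarrow> (nat \<Rightarrow> 'a::zero) set \<Rightarrow> enat" where
  "min_hdist n C = (INF p \<in> {(x, y). x \<in> C \<and> y \<in> C \<and> x \<noteq> y}. enat (hdist n (fst p) (snd p)))"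

definition unitvec :: "nat \<Rightarrow> nat \<Rightarrow> 'a::{zero,one}" where
  "unitvec i = (\<lambda>j. if j = i then 1 else 0)"

definition lin_map_on :: "('a::field \<Rightarrow> 'v::ab_group_add \<Rightarrow> 'v) \<Rightarrow> nat \<Rightarrow> ((nat \<Rightarrow> 'a) \<Rightarrow> 'v) \<Rightarrow> bool" where
  "lin_map_on scale n f \<longleftrightarrow>
     (\<forall>x\<in>fvecs n. \<forall>y\<in>fvecs n. f (\<lambda>i. x i + y i) = f x + f y) \<and>
     (\<forall>c. \<forall>x\<in>fvecs n. f (\<lambda>i. c * x i) = scale c (f x))"

definition ker_on :: "nat \<Rightarrow> ((nat \<Rightarrow> 'a::zero) \<Rightarrow> 'v::zero) \<Rightarrow> (nat \<Rightarrow> 'a) set" where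
  "ker_on n f = {x \<in> fvecs n. f x = 0}"

definition quot_wt :: "nat \<Rightarrow> ((nat \<Rightarrow> 'a::zero) \<Rightarrow> 'v) \<Rightarrow> 'v \<Rightarrow> nat" where
  "quot_wt n f y = (LEAST w. \<exists>x\<in>fvecs n. f x = y \<and> hweight n x = w)"

end

theory Submission
  imports Defs
begin

definition phiof :: "('a \<Rightarrow> 'b \<Rightarrow> 'b) \<Rightarrow> (nat \<Rightarrow> 'b) \<Rightarrow> nat \<Rightarrow> (nat \<Rightarrow> 'a) \<Rightarrow> 'b::comm_monoid_add" where
  "phiof sc d n y = (\<Sum>k<n. sc (y k) (d k))"

context vector_space
begin


lemma unitvec_fvecs: "i < n \<Longrightarrow> (unitvec i :: nat \<Rightarrow> 'a) \<in> fvecs n"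
  by (auto simp: unitvec_def fvecs_def)

lemma decomp_gen:
  assumes lin: "lin_map_on scale n f"
  shows "m \<le> n \<Longrightarrow> (\<forall>i\<ge>m. x i = 0) \<Longrightarrow> f x = (\<Sum>i<m. scale (x i) (f (unitvec i)))"
proof (induction m arbitrary: x)
  case 0
  then have x0: "x = (\<lambda>i. 0 * 0)" by auto
  have "(\<lambda>i. 0) \<in> fvecs n" by (simp add: fvecs_def)
  then have "f (\<lambda>i. 0 * 0) = scale 0 (f (\<lambda>i. 0))"
    using lin unfolding lin_map_on_def by (auto dest!: spec[of _ 0])
  then show ?case using x0 by simp
next
  case (Suc m)
  define x' where "x' = x(m := 0)"
  have x'f: "x' \<in> fvecs n" using Suc.prems by (auto simp: x'_def fvecs_def)
  have uf: "(unitvec m :: nat \<Rightarrow> 'a) \<in> fvecs n" using Suc.prems by (intro unitvec_fvecs) simp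
  have xeq: "x = (\<lambda>i. x' i + (\<lambda>i. x m * unitvec m i) i)"
    by (auto simp: x'_def unitvec_def)
  have uf2: "(\<lambda>i. x m * unitvec m i) \<in> fvecs n" using Suc.prems by (auto simp: unitvec_def fvecs_def)
  have add: "\<forall>x\<in>fvecs n. \<forall>y\<in>fvecs n. f (\<lambda>i. x i + y i) = f x + f y"
    using lin by (simp add: lin_map_on_def)
  have "f x = f x' + f (\<lambda>i. x m * unitvec m i)"
    using add[rule_format, OF x'f uf2] xeq by simp
  also have "f (\<lambda>i. x m * unitvec m i) = scale (x m) (f (unitvec m))"
    using lin uf unfolding lin_map_on_def by blast
  also have "f x' = (\<Sum>i<m. scale (x' i) (f (unitvec i)))"
  proof -
    have "\<forall>i\<ge>m. x' i = 0" using Suc.prems by (auto simp: x'_def)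
    moreover have "m \<le> n" using Suc.prems by simp
    ultimately show ?thesis using Suc.IH[of x'] by blast
  qed
  also have "(\<Sum>i<m. scale (x' i) (f (unitvec i))) = (\<Sum>i<m. scale (x i) (f (unitvec i)))"
    by (rule sum.cong) (auto simp: x'_def)
  finally show ?case by simp
qed

lemma decomp:
  assumes "lin_map_on scale n f" "x \<in> fvecs n"
  shows "f x = (\<Sum>i<n. scale (x i) (f (unitvec i)))"
  using decomp_gen[OF assms(1), of n x] assms(2) by (simp add: fvecs_def)

lemma phi_lin: "lin_map_on scale n (phiof scale d n)"
  unfolding lin_map_on_def phiof_def
  by (simp add: scale_left_distrib sum.distrib scale_sum_right scale_scale)

lemma phi_unit: "i < n \<Longrightarrow> phiof scale d n (unitvec i) = d i"
proof -
  assume i: "i < n"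
  have "phiof scale d n (unitvec i) = (\<Sum>k\<in>{i}. scale (unitvec i k) (d k))"
    unfolding phiof_def by (rule sum.mono_neutral_right) (auto simp: i unitvec_def)
  then show ?thesis by (simp add: unitvec_def)
qed

lemma dir_a:
  assumes lin: "lin_map_on scale n1 f"
    and inj: "inj_on \<sigma> {..<n}" and sub: "\<sigma> ` {..<n} \<subseteq> {..<n1}"
    and d: "\<And>k. k < n \<Longrightarrow> d k = f (unitvec (\<sigma> k))"
    and y: "y \<in> fvecs n"
  shows "\<exists>x\<in>fvecs n1. f x = phiof scale d n y \<and> hweight n1 x \<le> hweight n y"
proof -
  define x where "x i = (if i \<in> \<sigma> ` {..<n} then y (the_inv_into {..<n} \<sigma> i) else 0)" for i
  have xs: "x (\<sigma> k) = y k" if "k < n" for k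
    using that inj by (simp add: x_def the_inv_into_f_f)
  have xf: "x \<in> fvecs n1" using sub by (auto simp: x_def fvecs_def)
  have "f x = (\<Sum>i<n1. scale (x i) (f (unitvec i)))" by (rule decomp[OF lin xf])
  also have "\<dots> = (\<Sum>i\<in>\<sigma> ` {..<n}. scale (x i) (f (unitvec i)))"
    by (rule sum.mono_neutral_right) (use sub in \<open>auto simp: x_def\<close>)
  also have "\<dots> = (\<Sum>k<n. scale (x (\<sigma> k)) (f (unitvec (\<sigma> k))))"
    by (rule sum.reindex[OF inj, unfolded comp_def])
  also have "\<dots> = phiof scale d n y"
    unfolding phiof_def by (rule sum.cong) (auto simp: xs d)
  finally have 1: "f x = phiof scale d n y" .
  have "{i. i < n1 \<and> x i \<noteq> 0} = \<sigma> ` {k. k < n \<and> y k \<noteq> 0}"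
  proof
    show "\<sigma> ` {k. k < n \<and> y k \<noteq> 0} \<subseteq> {i. i < n1 \<and> x i \<noteq> 0}" using sub by (auto simp: xs)
    show "{i. i < n1 \<and> x i \<noteq> 0} \<subseteq> \<sigma> ` {k. k < n \<and> y k \<noteq> 0}"
    proof
      fix i assume i: "i \<in> {i. i < n1 \<and> x i \<noteq> 0}"
      then have "i \<in> \<sigma> ` {..<n}" by (auto simp: x_def split: if_splits)
      then obtain k where "k < n" "i = \<sigma> k" by auto
      then show "i \<in> \<sigma> ` {k. k < n \<and> y k \<noteq> 0}" using i xs by auto
    qed
  qed
  moreover have "inj_on \<sigma> {k. k < n \<and> y k \<noteq> 0}" by (rule inj_on_subset[OF inj]) auto
  ultimately have "hweight n1 x = hweight n y"
    unfolding hweight_def by (simp add: card_image)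
  then show ?thesis using 1 xf by auto
qed

lemma dir_b:
  assumes lin: "lin_map_on scale n1 f"
    and cr: "\<And>i. i < n1 \<Longrightarrow> f (unitvec i) = scale (c i) (d (r i)) \<and> (c i \<noteq> 0 \<longrightarrow> r i < n)"
    and x: "x \<in> fvecs n1"
  shows "\<exists>y\<in>fvecs n. phiof scale d n y = f x \<and> hweight n y \<le> hweight n1 x"
proof -
  define y where "y k = (if k < n then (\<Sum>i\<in>{i. i < n1 \<and> r i = k}. x i * c i) else 0)" for k
  have yf: "y \<in> fvecs n" by (simp add: y_def fvecs_def)
  have "phiof scale d n y = (\<Sum>k<n. (\<Sum>i\<in>{i. i < n1 \<and> r i = k}. scale (x i) (f (unitvec i))))"
    unfolding phiof_def
  proof (rule sum.cong)
    fix k assume k: "k \<in> {..<n}"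
    have "scale (y k) (d k) = (\<Sum>i\<in>{i. i < n1 \<and> r i = k}. scale (x i * c i) (d k))"
      using k by (simp add: y_def scale_sum_left)
    also have "\<dots> = (\<Sum>i\<in>{i. i < n1 \<and> r i = k}. scale (x i) (f (unitvec i)))"
      by (rule sum.cong) (auto simp: cr scale_scale)
    finally show "scale (y k) (d k) = (\<Sum>i\<in>{i. i < n1 \<and> r i = k}. scale (x i) (f (unitvec i)))" .
  qed simp
  also have "\<dots> = (\<Sum>k<n. (\<Sum>i\<in>{i \<in> {i. i < n1 \<and> r i < n}. r i = k}. scale (x i) (f (unitvec i))))"
  proof (rule sum.cong)
    fix k assume "k \<in> {..<n}"
    then have "{i. i < n1 \<and> r i = k} = {i \<in> {i. i < n1 \<and> r i < n}. r i = k}" by auto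
    then show "(\<Sum>i\<in>{i. i < n1 \<and> r i = k}. scale (x i) (f (unitvec i))) =
      (\<Sum>i\<in>{i \<in> {i. i < n1 \<and> r i < n}. r i = k}. scale (x i) (f (unitvec i)))" by simp
  qed simp
  also have "\<dots> = (\<Sum>i\<in>{i. i < n1 \<and> r i < n}. scale (x i) (f (unitvec i)))"
    by (rule sum.group) auto
  also have "\<dots> = (\<Sum>i<n1. scale (x i) (f (unitvec i)))"
  proof (rule sum.mono_neutral_left)
    show "\<forall>i\<in>{..<n1} - {i. i < n1 \<and> r i < n}. scale (x i) (f (unitvec i)) = 0"
    proof
      fix i assume "i \<in> {..<n1} - {i. i < n1 \<and> r i < n}"
      then have "i < n1" "\<not> r i < n" by auto
      then have "c i = 0" using cr by blast
      then show "scale (x i) (f (unitvec i)) = 0" using cr \<open>i < n1\<close> by simp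
    qed
  qed auto
  also have "\<dots> = f x" by (rule decomp[OF lin x, symmetric])
  finally have 1: "phiof scale d n y = f x" .
  have "{k. k < n \<and> y k \<noteq> 0} \<subseteq> r ` {i. i < n1 \<and> x i \<noteq> 0}"
  proof
    fix k assume "k \<in> {k. k < n \<and> y k \<noteq> 0}"
    then have "(\<Sum>i\<in>{i. i < n1 \<and> r i = k}. x i * c i) \<noteq> 0" by (auto simp: y_def)
    then obtain i where "i < n1" "r i = k" "x i * c i \<noteq> 0"
      by (metis (mono_tags, lifting) mem_Collect_eq sum.neutral)
    then show "k \<in> r ` {i. i < n1 \<and> x i \<noteq> 0}" by auto
  qed
  then have "hweight n y \<le> card (r ` {i. i < n1 \<and> x i \<noteq> 0})"
    unfolding hweight_def by (rule card_mono[rotated]) simp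
  also have "\<dots> \<le> hweight n1 x" unfolding hweight_def by (rule card_image_le) simp
  finally show ?thesis using 1 yf by auto
qed

lemma kernel:
  assumes nz: "\<And>k. k < n \<Longrightarrow> d k \<noteq> 0"
    and ind: "\<forall>i<n. \<forall>j<n. i \<noteq> j \<longrightarrow> (\<forall>a b. scale a (d i) + scale b (d j) = 0 \<longrightarrow> a = 0 \<and> b = 0)"
  shows "min_hdist n (ker_on n (phiof scale d n)) \<ge> 3"
  unfolding min_hdist_def
proof (rule INF_greatest)
  fix p assume "p \<in> {(x, y). x \<in> ker_on n (phiof scale d n) \<and> y \<in> ker_on n (phiof scale d n) \<and> x \<noteq> y}"
  then obtain x y where p: "p = (x, y)" and xk: "x \<in> ker_on n (phiof scale d n)"
    and yk: "y \<in> ker_on n (phiof scale d n)" and xy: "x \<noteq> y" by auto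
  define z where "z i = x i - y i" for i
  have "phiof scale d n z = phiof scale d n x - phiof scale d n y"
    unfolding phiof_def z_def by (simp add: scale_left_diff_distrib sum_subtractf)
  then have z0: "phiof scale d n z = 0" using xk yk by (simp add: ker_on_def)
  define T where "T = {i. i < n \<and> z i \<noteq> 0}"
  have hd: "hdist n x y = card T" unfolding hdist_def T_def z_def by simp
  have fT: "finite T" by (simp add: T_def)
  have "T \<noteq> {}"
  proof
    assume "T = {}"
    then have "\<forall>i<n. x i = y i" by (auto simp: T_def z_def)
    moreover have "\<forall>i\<ge>n. x i = y i" using xk yk by (simp add: ker_on_def fvecs_def)
    ultimately have "x = y" by (metis not_le ext)
    then show False using xy by simp
  qed
  have phiT: "phiof scale d n z = (\<Sum>k\<in>T. scale (z k) (d k))"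
    unfolding phiof_def by (rule sum.mono_neutral_right) (auto simp: T_def)
  have "\<not> card T < 3"
  proof
    assume "card T < 3"
    moreover have "card T \<noteq> 0" using fT \<open>T \<noteq> {}\<close> by simp
    ultimately have "card T = 1 \<or> card T = 2" by linarith
    then show False
    proof
      assume "card T = 1"
      then obtain i where Ti: "T = {i}" by (rule card_1_singletonE)
      then have "scale (z i) (d i) = 0" using z0 phiT by simp
      then show False using Ti nz[of i] by (auto simp: T_def scale_eq_0_iff)
    next
      assume "card T = 2"
      then obtain i j where Tij: "T = {i, j}" "i \<noteq> j" by (auto simp: card_2_iff)
      then have "scale (z i) (d i) + scale (z j) (d j) = 0" using z0 phiT by simp
      then have "z i = 0" using ind Tij by (auto simp: T_def)
      then show False using Tij by (auto simp: T_def)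
    qed
  qed
  then show "3 \<le> enat (hdist n (fst p) (snd p))" using p hd by (simp add: numeral_le_enat_iff)
qed

end

lemma least_eq:
  assumes ab: "\<And>y. y \<in> fvecs n2 \<Longrightarrow> \<phi> y = v \<Longrightarrow> \<exists>x\<in>fvecs n1. \<xi> x = v \<and> hweight n1 x \<le> hweight n2 y"
    and ba: "\<And>x. x \<in> fvecs n1 \<Longrightarrow> \<xi> x = v \<Longrightarrow> \<exists>y\<in>fvecs n2. \<phi> y = v \<and> hweight n2 y \<le> hweight n1 x"
    and ex: "\<exists>x\<in>fvecs n1. \<xi> x = v"
  shows "quot_wt n1 \<xi> v = quot_wt n2 \<phi> v"
proof -
  have e1: "\<exists>w. \<exists>x\<in>fvecs n1. \<xi> x = v \<and> hweight n1 x = w" using ex by auto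
  then obtain x0 where "x0 \<in> fvecs n1" "\<xi> x0 = v" by auto
  then obtain y0 where "y0 \<in> fvecs n2" "\<phi> y0 = v" using ba by blast
  then have e2: "\<exists>w. \<exists>y\<in>fvecs n2. \<phi> y = v \<and> hweight n2 y = w" by auto
  obtain x1 where x1: "x1 \<in> fvecs n1" "\<xi> x1 = v" "hweight n1 x1 = quot_wt n1 \<xi> v"
    using LeastI_ex[OF e1] unfolding quot_wt_def by blast
  obtain y1 where y1: "y1 \<in> fvecs n2" "\<phi> y1 = v" "hweight n2 y1 = quot_wt n2 \<phi> v"
    using LeastI_ex[OF e2] unfolding quot_wt_def by blast
  obtain y2 where y2: "y2 \<in> fvecs n2" "\<phi> y2 = v" "hweight n2 y2 \<le> hweight n1 x1"
    using ba[OF x1(1,2)] by blast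
  obtain x2 where x2: "x2 \<in> fvecs n1" "\<xi> x2 = v" "hweight n1 x2 \<le> hweight n2 y1"
    using ab[OF y1(1,2)] by blast
  have "quot_wt n2 \<phi> v \<le> hweight n2 y2"
    unfolding quot_wt_def by (rule Least_le) (use y2 in auto)
  moreover have "quot_wt n1 \<xi> v \<le> hweight n1 x2"
    unfolding quot_wt_def by (rule Least_le) (use x2 in auto)
  ultimately show ?thesis using x1 y1 x2 y2 by linarith
qed

theorem corollary4p1:
  fixes scale :: "'a::{finite,field} \<Rightarrow> 'v::ab_group_add \<Rightarrow> 'v"
    and \<xi> :: "(nat \<Rightarrow> 'a) \<Rightarrow> 'v" and \<nu>\<^sub>1 :: nat
  assumes "vector_space scale"
    and "\<exists>B. finite_dimensional_vector_space scale B"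
    and "lin_map_on scale \<nu>\<^sub>1 \<xi>"
    and "\<xi> ` fvecs \<nu>\<^sub>1 = UNIV"
  shows "\<exists>\<nu>\<^sub>2 :: nat. \<exists>\<phi> :: (nat \<Rightarrow> 'a) \<Rightarrow> 'v.
           \<nu>\<^sub>2 \<le> \<nu>\<^sub>1 \<and> lin_map_on scale \<nu>\<^sub>2 \<phi> \<and> \<phi> ` fvecs \<nu>\<^sub>2 = UNIV \<and>
           (\<forall>v. quot_wt \<nu>\<^sub>1 \<xi> v = quot_wt \<nu>\<^sub>2 \<phi> v) \<and>
           (\<forall>i<\<nu>\<^sub>2. \<forall>j<\<nu>\<^sub>2. i \<noteq> j \<longrightarrow>
              (\<forall>a b. scale a (\<phi> (unitvec i)) + scale b (\<phi> (unitvec j)) = 0 \<longrightarrow> a = 0 \<and> b = 0)) \<and>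
           min_hdist \<nu>\<^sub>2 (ker_on \<nu>\<^sub>2 \<phi>) \<ge> 3"
proof -
  interpret V: vector_space scale by fact
  note lin = assms(3)
  define n1 where "n1 = \<nu>\<^sub>1"
  define col where "col i = \<xi> (unitvec i)" for i
  define S where "S = {i. i < n1 \<and> col i \<noteq> 0 \<and> (\<forall>j<i. \<forall>c. col i \<noteq> scale c (col j))}"
  have rep: "\<exists>j\<in>S. \<exists>c. col i = scale c (col j)" if i: "i < n1" "col i \<noteq> 0" for i
  proof -
    let ?P = "\<lambda>j. \<exists>c. col i = scale c (col j)"
    have Pi: "?P i" by (rule exI[of _ 1]) simp
    define j where "j = (LEAST j. ?P j)"
    have Pj: "?P j" unfolding j_def by (rule LeastI[of _ i]) (rule Pi)
    have ji: "j \<le> i" unfolding j_def by (rule Least_le) (rule Pi)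
    then obtain c where c: "col i = scale c (col j)" using Pj by blast
    have cj: "col j \<noteq> 0" using c i(2) by auto
    have "\<forall>k<j. \<forall>e. col j \<noteq> scale e (col k)"
    proof (intro allI impI notI)
      fix k e assume k: "k < j" and "col j = scale e (col k)"
      then have "col i = scale (c * e) (col k)" using c by (simp add: V.scale_scale)
      then have "?P k" by blast
      then have "j \<le> k" unfolding j_def by (rule Least_le)
      then show False using k by simp
    qed
    then have "j \<in> S" using ji i cj by (auto simp: S_def)
    then show ?thesis using c by blast
  qed
  have indlt: "a = 0 \<and> b = 0" if "i \<in> S" "j \<in> S" "i < j" "scale a (col i) + scale b (col j) = 0" for i j a b
  proof -
    have b0: "b = 0"
    proof (rule ccontr)
      assume b: "b \<noteq> 0"
      have "scale b (col j) = - scale a (col i)" using that(4) by (simp add: eq_neg_iff_add_eq_0 add.commute)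
      then have "scale (inverse b) (scale b (col j)) = scale (inverse b) (- scale a (col i))" by simp
      then have "col j = scale (- (inverse b * a)) (col i)"
        using b by (simp add: V.scale_scale V.scale_minus_right V.scale_minus_left)
      moreover have "\<forall>k<j. \<forall>c. col j \<noteq> scale c (col k)" using that(2) by (simp add: S_def)
      ultimately show False using that(3) by blast
    qed
    then have "scale a (col i) = 0" using that(4) by simp
    then have "a = 0" using that(1) by (auto simp: S_def V.scale_eq_0_iff)
    then show ?thesis using b0 by simp
  qed
  have ind: "a = 0 \<and> b = 0" if "i \<in> S" "j \<in> S" "i \<noteq> j" "scale a (col i) + scale b (col j) = 0" for i j a b
  proof (cases "i < j")
    case True then show ?thesis using indlt that by blast
  next
    case False then have "j < i" using that(3) by simp
    then show ?thesis using indlt[of j i b a] that by (simp add: add.commute)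
  qed
  have finS: "finite S" by (rule finite_subset[of _ "{..<n1}"]) (auto simp: S_def)
  define L where "L = sorted_list_of_set S"
  define n where "n = length L"
  define \<sigma> where "\<sigma> k = L ! k" for k
  have distL: "distinct L" and setL: "set L = S" using finS by (auto simp: L_def)
  have nle: "n \<le> n1"
  proof -
    have "n = card S" using finS by (simp add: n_def L_def)
    also have "\<dots> \<le> card {..<n1}" by (rule card_mono) (auto simp: S_def)
    finally show ?thesis by simp
  qed
  have \<sigma>S: "\<sigma> k \<in> S" if "k < n" for k using that setL nth_mem by (auto simp: \<sigma>_def n_def)
  have inj: "inj_on \<sigma> {..<n}" using distL by (auto simp: inj_on_def \<sigma>_def n_def nth_eq_iff_index_eq)
  have sub: "\<sigma> ` {..<n} \<subseteq> {..<n1}" using \<sigma>S by (auto simp: S_def)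
  have onto: "\<exists>k<n. \<sigma> k = j" if "j \<in> S" for j
    using that setL by (auto simp: in_set_conv_nth \<sigma>_def n_def)
  define d where "d k = col (\<sigma> k)" for k
  have "\<forall>i. \<exists>p. i < n1 \<longrightarrow> col i = scale (fst p) (d (snd p)) \<and> (fst p \<noteq> 0 \<longrightarrow> snd p < n)"
  proof
    fix i
    show "\<exists>p. i < n1 \<longrightarrow> col i = scale (fst p) (d (snd p)) \<and> (fst p \<noteq> 0 \<longrightarrow> snd p < n)"
    proof (cases "i < n1 \<and> col i \<noteq> 0")
      case True
      then obtain j c where "j \<in> S" "col i = scale c (col j)" using rep by blast
      moreover obtain k where "k < n" "\<sigma> k = j" using onto \<open>j \<in> S\<close> by blast
      ultimately show ?thesis by (intro exI[of _ "(c, k)"]) (auto simp: d_def)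
    next
      case False then show ?thesis by (intro exI[of _ "(0, 0)"]) auto
    qed
  qed
  then obtain g where g: "\<And>i. i < n1 \<Longrightarrow> col i = scale (fst (g i)) (d (snd (g i))) \<and> (fst (g i) \<noteq> 0 \<longrightarrow> snd (g i) < n)"
    by metis
  define \<phi> where "\<phi> = phiof scale d n"
  have linn: "lin_map_on scale n1 \<xi>" using lin by (simp add: n1_def)
  have B: "\<exists>y\<in>fvecs n. \<phi> y = \<xi> x \<and> hweight n y \<le> hweight n1 x" if "x \<in> fvecs n1" for x
    unfolding \<phi>_def
    by (rule V.dir_b[OF linn _ that, of "\<lambda>i. fst (g i)" d "\<lambda>i. snd (g i)"]) (use g in \<open>auto simp: col_def\<close>)
  have A: "\<exists>x\<in>fvecs n1. \<xi> x = \<phi> y \<and> hweight n1 x \<le> hweight n y" if "y \<in> fvecs n" for y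
    unfolding \<phi>_def by (rule V.dir_a[OF linn inj sub _ that]) (simp add: d_def col_def)
  have surj: "\<phi> ` fvecs n = UNIV"
  proof -
    have "v \<in> \<phi> ` fvecs n" for v
    proof -
      obtain x where "x \<in> fvecs n1" "\<xi> x = v" using assms(4) n1_def by (metis UNIV_I imageE)
      then show ?thesis using B by force
    qed
    then show ?thesis by auto
  qed
  have qw: "quot_wt n1 \<xi> v = quot_wt n \<phi> v" for v
  proof (rule least_eq)
    show "\<exists>x\<in>fvecs n1. \<xi> x = v" using assms(4) n1_def by (metis UNIV_I imageE)
  next
    fix y assume "y \<in> fvecs n" "\<phi> y = v"
    then show "\<exists>x\<in>fvecs n1. \<xi> x = v \<and> hweight n1 x \<le> hweight n y" using A by metis
  next
    fix x assume "x \<in> fvecs n1" "\<xi> x = v"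
    then show "\<exists>y\<in>fvecs n. \<phi> y = v \<and> hweight n y \<le> hweight n1 x" using B by metis
  qed
  have pw: "\<forall>i<n. \<forall>j<n. i \<noteq> j \<longrightarrow> (\<forall>a b. scale a (d i) + scale b (d j) = 0 \<longrightarrow> a = 0 \<and> b = 0)"
  proof (intro allI impI)
    fix i j a b assume "i < n" "j < n" "i \<noteq> j" "scale a (d i) + scale b (d j) = 0"
    moreover have "\<sigma> i \<noteq> \<sigma> j" using inj \<open>i < n\<close> \<open>j < n\<close> \<open>i \<noteq> j\<close> by (auto simp: inj_on_def)
    ultimately show "a = 0 \<and> b = 0" using ind[of "\<sigma> i" "\<sigma> j" a b] \<sigma>S by (auto simp: d_def)
  qed
  have nz: "d k \<noteq> 0" if "k < n" for k using \<sigma>S[OF that] by (auto simp: d_def S_def)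
  have pw2: "\<forall>i<n. \<forall>j<n. i \<noteq> j \<longrightarrow>
              (\<forall>a b. scale a (\<phi> (unitvec i)) + scale b (\<phi> (unitvec j)) = 0 \<longrightarrow> a = 0 \<and> b = 0)"
    using pw by (simp add: \<phi>_def V.phi_unit)
  have ker: "min_hdist n (ker_on n \<phi>) \<ge> 3" unfolding \<phi>_def by (rule V.kernel[OF nz pw])
  show ?thesis
    apply (rule exI[of _ n], rule exI[of _ \<phi>])
    using nle V.phi_lin surj qw pw2 ker by (simp add: n1_def \<phi>_def)
qed

end
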